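(* Let $n\ge 1$, let $\boldsymbol{u}^\star\in\mathbb{R}^n\setminus\{\boldsymbol{0}\}$, and define $f:\mathbb{R}^n\to\mathbb{R}$ by $f(\boldsymbol{u})=\frac12\|\boldsymbol{u}\boldsymbol{u}^{\mathrm T}-\boldsymbol{u}^\star{\boldsymbol{u}^\star}^{\mathrm T}\|_1$. Then the set of stationary points of $f$ is $$\{\boldsymbol{u}\in\mathbb{R}^n:\boldsymbol{0}\in\partial f(\boldsymbol{u})\}=\Big\{\boldsymbol{u}\in\mathbb{R}^n:\ |u_i|\le|u_i^\star|\ \text{for all } i\in[n],\ \ \sum_{i:\,u_i^\star\neq 0}\operatorname{sgn}(u_i^\star)\,u_i=0\Big\}\cup\{\boldsymbol{u}^\star,-\boldsymbol{u}^\star\}.$$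
   Context: For a matrix $\boldsymbol{X}$, $\|\boldsymbol{X}\|_1=\sum_{i,j}|x_{ij}|$ (entrywise $\ell_1$-norm). $[n]=\{1,\dots,n\}$. $\partial f$ denotes the subdifferential of $f$; since $f$ is locally Lipschitz and subdifferentially regular, the Fréchet, limiting and Clarke subdifferentials of $f$ coincide, and any of them may be used. Explicitly, $\partial f(\boldsymbol{u})=\{\boldsymbol{Z}\boldsymbol{u}:\boldsymbol{Z}\text{ symmetric},\ \boldsymbol{Z}\in\operatorname{Sign}(\boldsymbol{u}\boldsymbol{u}^{\mathrm T}-\boldsymbol{u}^\star{\boldsymbol{u}^\star}^{\mathrm T})\}$, where $\operatorname{Sign}(x)=\{x/|x|\}$ for $x\ne0$, $\operatorname{Sign}(0)=[-1,1]$, applied entrywise. A point $\boldsymbol{u}$ is stationary if $\boldsymbol{0}\in\partial f(\boldsymbol{u})$. (The condition $|u_i|\le|u_i^\star|$ forces $u_i=0$ whenever $u_i^\star=0$.) *)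

theory Defs
  imports "HOL-Analysis.Analysis"
begin

definition Sign :: "real \<Rightarrow> real set" where
  "Sign x = (if x \<noteq> 0 then {x / \<bar>x\<bar>} else {-1..1})"

definition f_obj :: "real^'n \<Rightarrow> real^'n \<Rightarrow> real" where
  "f_obj ustar u = (1/2) * (\<Sum>i\<in>UNIV. \<Sum>j\<in>UNIV. \<bar>u$i * u$j - ustar$i * ustar$j\<bar>)"

text \<open>Subdifferential of f at u, in the explicit form given in the paper:
  { Z u : Z symmetric, Z_ij \<in> Sign((u u^T - u* u*^T)_ij) for all i,j }.\<close>
definition subdiff_f :: "real^'n \<Rightarrow> real^'n \<Rightarrow> (real^'n) set" where
  "subdiff_f ustar u = {Z *v u | Z :: real^'n^'n. transpose Z = Z \<and>
      (\<forall>i j. Z$i$j \<in> Sign (u$i * u$j - ustar$i * ustar$j))}"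

definition stationary_f :: "real^'n \<Rightarrow> real^'n \<Rightarrow> bool" where
  "stationary_f ustar u \<longleftrightarrow> 0 \<in> subdiff_f ustar u"

end

theory Submission
  imports Defs
begin

lemma Sign_abs: "z \<in> Sign x \<Longrightarrow> \<bar>z\<bar> \<le> 1"
  by (auto simp: Sign_def split: if_splits)

lemma Sign_ne: "z \<in> Sign x \<Longrightarrow> x \<noteq> 0 \<Longrightarrow> z = sgn x"
  by (auto simp: Sign_def real_sgn_eq split: if_splits)

lemma sgn_self: "(x::real) * sgn x = \<bar>x\<bar>"
  by (simp add: sgn_if)

lemma sgn_self2: "sgn (x::real) * x = \<bar>x\<bar>"
  by (simp add: sgn_if)

lemma sgn_diff_big: "\<bar>a::real\<bar> > \<bar>b\<bar> \<Longrightarrow> sgn (a - b) = sgn a"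
  by (auto simp: sgn_if abs_if split: if_splits)

lemma sgn_diff_small: "\<bar>a::real\<bar> < \<bar>b\<bar> \<Longrightarrow> sgn (a - b) = - sgn b"
  by (auto simp: sgn_if abs_if split: if_splits)

lemma abs_sgn_mult_le: "\<bar>sgn (a::real) * b\<bar> \<le> \<bar>b\<bar>"
  by (auto simp: sgn_if abs_mult)

lemma sum_split_univ: "sum g (UNIV::'n::finite set) = sum g C + sum g (- C)"
  by (metis Compl_eq_Diff_UNIV add.commute finite subset_UNIV sum.subset_diff)

lemma step1:
  fixes u v :: "real^'n" and Z :: "real^'n^'n"
  assumes hsym: "\<And>i j. Z$i$j = Z$j$i"
    and hS: "\<And>i j. Z$i$j \<in> Sign (u$i* u$j - v$i* v$j)"
    and hrow: "\<And>i. (\<Sum>j\<in>UNIV. Z$i$j * u$j) = 0"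
  shows "\<bar>u$i\<bar> \<le> \<bar>v$i\<bar>"
proof (rule ccontr)
  assume "\<not> \<bar>u$i\<bar> \<le> \<bar>v$i\<bar>"
  hence i0: "\<bar>u$i\<bar> > \<bar>v$i\<bar>" by simp
  define A where "A = {i. \<bar>u$i\<bar> > \<bar>v$i\<bar>}"
  define C where "C = {i. \<bar>u$i\<bar> < \<bar>v$i\<bar>}"
  define P where "P = (\<Sum>l\<in>-C. \<bar>u$l\<bar>)"
  define PA where "PA = (\<Sum>l\<in>A. \<bar>u$l\<bar>)"
  define w where "w = (\<Sum>l\<in>-A. sgn (v$l) * u$l)"
  define wC where "wC = (\<Sum>l\<in>C. sgn (v$l) * u$l)"
  define wB where "wB = (\<Sum>l\<in>-A-C. sgn (v$l) * u$l)"
  have F1: "Z$i$l * u$l = sgn (u$i) * \<bar>u$l\<bar>" if "i \<in> A" "l \<notin> C" for i l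
  proof (cases "u$l = 0")
    case True thus ?thesis by simp
  next
    case False
    have a: "\<bar>u$i\<bar> > \<bar>v$i\<bar>" "\<bar>u$l\<bar> \<ge> \<bar>v$l\<bar>" using that by (auto simp: A_def C_def)
    have "\<bar>u$i\<bar> * \<bar>u$l\<bar> > \<bar>v$i\<bar> * \<bar>u$l\<bar>" using a False by simp
    moreover have "\<bar>v$i\<bar> * \<bar>u$l\<bar> \<ge> \<bar>v$i\<bar> * \<bar>v$l\<bar>" using a by (simp add: mult_left_mono)
    ultimately have "\<bar>u$i* u$l\<bar> > \<bar>v$i* v$l\<bar>" by (simp add: abs_mult)
    hence "sgn (u$i* u$l - v$i* v$l) = sgn (u$i* u$l)" by (rule sgn_diff_big)
    moreover have "u$i* u$l - v$i* v$l \<noteq> 0" using \<open>\<bar>u$i* u$l\<bar> > \<bar>v$i* v$l\<bar>\<close> by auto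
    ultimately have "Z$i$l = sgn (u$i) * sgn (u$l)" using Sign_ne[OF hS] by (simp add: sgn_mult)
    thus ?thesis by (simp add: sgn_self2 mult.assoc)
  qed
  have F2: "Z$j$l * u$l = - sgn (v$j) * sgn (v$l) * u$l" if "j \<in> C" "l \<notin> A" for j l
  proof (cases "u$l = 0")
    case True thus ?thesis by simp
  next
    case False
    have a: "\<bar>u$j\<bar> < \<bar>v$j\<bar>" "\<bar>u$l\<bar> \<le> \<bar>v$l\<bar>" using that by (auto simp: A_def C_def)
    have "\<bar>u$j\<bar> * \<bar>u$l\<bar> < \<bar>v$j\<bar> * \<bar>u$l\<bar>" using a False by simp
    moreover have "\<bar>v$j\<bar> * \<bar>u$l\<bar> \<le> \<bar>v$j\<bar> * \<bar>v$l\<bar>" using a by (simp add: mult_left_mono)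
    ultimately have "\<bar>u$j* u$l\<bar> < \<bar>v$j* v$l\<bar>" by (simp add: abs_mult)
    hence "sgn (u$j* u$l - v$j* v$l) = - sgn (v$j* v$l)" by (rule sgn_diff_small)
    moreover have "u$j* u$l - v$j* v$l \<noteq> 0" using \<open>\<bar>u$j* u$l\<bar> < \<bar>v$j* v$l\<bar>\<close> by auto
    ultimately have "Z$j$l = - sgn (v$j) * sgn (v$l)" using Sign_ne[OF hS] by (simp add: sgn_mult)
    thus ?thesis by simp
  qed
  have rowA: "(\<Sum>j\<in>C. Z$i$j* u$j) = - sgn (u$i) * P" if "i \<in> A" for i
  proof -
    have "0 = (\<Sum>j\<in>C. Z$i$j* u$j) + (\<Sum>j\<in>-C. Z$i$j* u$j)"
      using hrow[of i] sum_split_univ[of "\<lambda>j. Z$i$j* u$j" C] by simp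
    also have "(\<Sum>j\<in>-C. Z$i$j* u$j) = (\<Sum>j\<in>-C. sgn (u$i) * \<bar>u$j\<bar>)"
      using F1[OF that] by (intro sum.cong) auto
    also have "\<dots> = sgn (u$i) * P" by (simp add: P_def sum_distrib_left)
    finally show ?thesis by linarith
  qed
  have rowC: "(\<Sum>l\<in>A. Z$j$l* u$l) = sgn (v$j) * w" if "j \<in> C" for j
  proof -
    have "0 = (\<Sum>l\<in>A. Z$j$l* u$l) + (\<Sum>l\<in>-A. Z$j$l* u$l)"
      using hrow[of j] sum_split_univ[of "\<lambda>l. Z$j$l* u$l" A] by simp
    also have "(\<Sum>l\<in>-A. Z$j$l* u$l) = (\<Sum>l\<in>-A. - sgn (v$j) * (sgn (v$l) * u$l))"
      using F2[OF that] by (intro sum.cong) auto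
    also have "\<dots> = - sgn (v$j) * w" by (simp add: w_def sum_distrib_left)
    finally show ?thesis by linarith
  qed
  define X where "X = (\<Sum>i\<in>A. \<Sum>j\<in>C. Z$i$j* u$i* u$j)"
  have X1: "X = - P * PA"
  proof -
    have "X = (\<Sum>i\<in>A. u$i * (\<Sum>j\<in>C. Z$i$j* u$j))"
      unfolding X_def by (intro sum.cong refl) (simp add: sum_distrib_left mult_ac)
    also have "\<dots> = (\<Sum>i\<in>A. - P * (u$i * sgn (u$i)))"
      using rowA by (intro sum.cong refl) (simp add: mult_ac)
    also have "\<dots> = - P * PA" by (simp add: PA_def sgn_self sum_distrib_left)
    finally show ?thesis .
  qed
  have X2: "X = w * wC"
  proof -
    have "X = (\<Sum>j\<in>C. \<Sum>i\<in>A. Z$i$j* u$i* u$j)" unfolding X_def by (rule sum.swap)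
    also have "\<dots> = (\<Sum>j\<in>C. u$j * (\<Sum>i\<in>A. Z$j$i* u$i))"
      by (intro sum.cong refl) (simp add: sum_distrib_left mult_ac hsym)
    also have "\<dots> = (\<Sum>j\<in>C. w * (sgn (v$j) * u$j))"
      using rowC by (intro sum.cong refl) (simp add: mult_ac)
    also have "\<dots> = w * wC" by (simp add: wC_def sum_distrib_left)
    finally show ?thesis .
  qed
  have iA: "i \<in> A" using i0 by (simp add: A_def)
  have PApos: "PA > 0"
  proof -
    have "\<bar>u$i\<bar> \<le> PA" unfolding PA_def using iA by (intro member_le_sum) auto
    moreover have "\<bar>u$i\<bar> > 0" using i0 by linarith
    ultimately show ?thesis by linarith
  qed
  have AC: "A \<subseteq> -C" by (auto simp: A_def C_def)
  have PPA: "PA \<le> P" unfolding PA_def P_def using AC by (intro sum_mono2) auto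
  have "C \<noteq> {}"
  proof
    assume "C = {}"
    hence "X = 0" by (simp add: X_def)
    with X1 PApos PPA show False by (simp add: mult_pos_pos)
  qed
  then obtain j0 where j0: "j0 \<in> C" by auto
  have wle: "\<bar>w\<bar> \<le> PA"
  proof -
    have "v$j0 \<noteq> 0" using j0 by (auto simp: C_def)
    hence "\<bar>w\<bar> = \<bar>sgn (v$j0) * w\<bar>" by (simp add: abs_mult abs_sgn_eq)
    also have "\<dots> = \<bar>\<Sum>l\<in>A. Z$j0$l* u$l\<bar>" using rowC[OF j0] by simp
    also have "\<dots> \<le> (\<Sum>l\<in>A. \<bar>Z$j0$l* u$l\<bar>)" by (rule sum_abs)
    also have "\<dots> \<le> PA" unfolding PA_def
    proof (intro sum_mono)
      fix l
      have "\<bar>Z$j0$l\<bar> \<le> 1" using Sign_abs[OF hS] .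
      thus "\<bar>Z$j0$l* u$l\<bar> \<le> \<bar>u$l\<bar>" by (simp add: abs_mult mult_left_le_one_le)
    qed
    finally show ?thesis .
  qed
  have wsplit: "w = wB + wC"
  proof -
    have "C \<subseteq> -A" by (auto simp: A_def C_def)
    thus ?thesis unfolding w_def wB_def wC_def by (intro sum.subset_diff) auto
  qed
  have wBle: "\<bar>wB\<bar> \<le> P"
  proof -
    have "\<bar>wB\<bar> \<le> (\<Sum>l\<in>-A-C. \<bar>sgn (v$l) * u$l\<bar>)" unfolding wB_def by (rule sum_abs)
    also have "\<dots> \<le> (\<Sum>l\<in>-A-C. \<bar>u$l\<bar>)"
      by (intro sum_mono) (rule abs_sgn_mult_le)
    also have "\<dots> \<le> P" unfolding P_def by (intro sum_mono2) auto
    finally show ?thesis .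
  qed
  have key: "w * wC = - P * PA" using X1 X2 by simp
  have Ppos: "P > 0" using PApos PPA by linarith
  have "P * PA > 0" using Ppos PApos by simp
  have neg: "w * wC < 0" using key \<open>P * PA > 0\<close> by linarith
  show False
  proof (cases "w > 0")
    case True
    hence "wC < 0" using neg by (simp add: mult_less_0_iff)
    hence "PA * wC \<le> w * wC" using wle True by (intro mult_right_mono_neg) auto
    hence "PA * wC \<le> PA * (- P)" using key by (simp add: mult.commute)
    hence "wC \<le> - P" using PApos by (simp only: mult_le_cancel_left_pos)
    thus False using wsplit wBle True by linarith
  next
    case False
    hence wneg: "w < 0" using neg by (cases "w = 0") simp_all
    hence "wC > 0" using neg by (simp add: mult_less_0_iff)
    hence "(- PA) * wC \<le> w * wC" using wle wneg by (intro mult_right_mono) auto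
    hence "PA * P \<le> PA * wC" using key by (simp add: mult.commute)
    hence "P \<le> wC" using PApos by (simp only: mult_le_cancel_left_pos)
    thus False using wsplit wBle wneg by linarith
  qed
qed


lemma Fneg:
  fixes u v :: "real^'n" and Z :: "real^'n^'n"
  assumes "Z$j$l \<in> Sign (u$j * u$l - v$j * v$l)" "\<bar>u$j\<bar> < \<bar>v$j\<bar>" "\<bar>u$l\<bar> \<le> \<bar>v$l\<bar>"
  shows "Z$j$l * u$l = - sgn (v$j) * sgn (v$l) * u$l"
proof (cases "u$l = 0")
  case True thus ?thesis by simp
next
  case False
  have "\<bar>u$j\<bar> * \<bar>u$l\<bar> < \<bar>v$j\<bar> * \<bar>u$l\<bar>" using assms False by simp
  moreover have "\<bar>v$j\<bar> * \<bar>u$l\<bar> \<le> \<bar>v$j\<bar> * \<bar>v$l\<bar>" using assms by (simp add: mult_left_mono)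
  ultimately have "\<bar>u$j * u$l\<bar> < \<bar>v$j * v$l\<bar>" by (simp add: abs_mult)
  hence "sgn (u$j * u$l - v$j * v$l) = - sgn (v$j * v$l)" by (rule sgn_diff_small)
  moreover have "u$j * u$l - v$j * v$l \<noteq> 0" using \<open>\<bar>u$j * u$l\<bar> < \<bar>v$j * v$l\<bar>\<close> by auto
  ultimately have "Z$j$l = - sgn (v$j) * sgn (v$l)" using Sign_ne[OF assms(1)] by (simp add: sgn_mult)
  thus ?thesis by simp
qed

lemma step2:
  fixes u v :: "real^'n" and Z :: "real^'n^'n"
  assumes hS: "\<And>i j. Z$i$j \<in> Sign (u$i * u$j - v$i * v$j)"
    and hrow: "\<And>i. (\<Sum>j\<in>UNIV. Z$i$j * u$j) = 0"
    and hle: "\<And>i. \<bar>u$i\<bar> \<le> \<bar>v$i\<bar>"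
    and j0: "\<bar>u$j0\<bar> < \<bar>v$j0\<bar>"
  shows "(\<Sum>l\<in>UNIV. sgn (v$l) * u$l) = 0"
proof -
  have "0 = (\<Sum>l\<in>UNIV. Z$j0$l * u$l)" using hrow by simp
  also have "\<dots> = (\<Sum>l\<in>UNIV. - sgn (v$j0) * (sgn (v$l) * u$l))"
    by (intro sum.cong refl) (simp add: Fneg[OF hS j0 hle])
  also have "\<dots> = - sgn (v$j0) * (\<Sum>l\<in>UNIV. sgn (v$l) * u$l)" by (simp add: sum_distrib_left)
  finally have "sgn (v$j0) * (\<Sum>l\<in>UNIV. sgn (v$l) * u$l) = 0" by simp
  moreover have "sgn (v$j0) \<noteq> 0" using j0 by (auto simp: sgn_0_0)
  ultimately show ?thesis by simp
qed

lemma step3: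
  fixes u v :: "real^'n" and Z :: "real^'n^'n"
  assumes hsym: "\<And>i j. Z$i$j = Z$j$i"
    and hS: "\<And>i j. Z$i$j \<in> Sign (u$i * u$j - v$i * v$j)"
    and hrow: "\<And>i. (\<Sum>j\<in>UNIV. Z$i$j * u$j) = 0"
    and heq: "\<And>i. \<bar>u$i\<bar> = \<bar>v$i\<bar>"
    and ne: "{i. v$i \<noteq> 0 \<and> u$i = v$i} \<noteq> {}"
  shows "(\<Sum>l\<in>{i. v$i \<noteq> 0 \<and> u$i = - v$i}. \<bar>v$l\<bar>) \<le> (\<Sum>l\<in>{i. v$i \<noteq> 0 \<and> u$i = v$i}. \<bar>v$l\<bar>)"
proof -
  define Tp where "Tp = {i. v$i \<noteq> 0 \<and> u$i = v$i}"
  define Tm where "Tm = {i. v$i \<noteq> 0 \<and> u$i = - v$i}"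
  define P where "P = (\<Sum>l\<in>Tp. \<bar>v$l\<bar>)"
  define M where "M = (\<Sum>l\<in>Tm. \<bar>v$l\<bar>)"
  have cross: "Z$i$l * u$l = sgn (v$i) * \<bar>v$l\<bar>" if "i \<in> Tp" "l \<in> Tm" for i l
  proof -
    have e: "u$i * u$l - v$i * v$l = - 2 * (v$i * v$l)" using that by (simp add: Tp_def Tm_def)
    have nz: "v$i * v$l \<noteq> 0" using that by (simp add: Tp_def Tm_def)
    have "Z$i$l = sgn (- 2 * (v$i * v$l))" using Sign_ne[OF hS[of i l]] e nz by simp
    hence "Z$i$l = - sgn (v$i) * sgn (v$l)" by (simp add: sgn_mult)
    thus ?thesis using that by (simp add: Tm_def sgn_self2)
  qed
  have rest: "u$l = 0" if "l \<notin> Tp" "l \<notin> Tm" for l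
    using that heq[of l] by (auto simp: Tp_def Tm_def abs_if split: if_splits)
  have row: "(\<Sum>l\<in>Tp. Z$i$l * v$l) = - sgn (v$i) * M" if "i \<in> Tp" for i
  proof -
    have "0 = (\<Sum>l\<in>Tp. Z$i$l * u$l) + (\<Sum>l\<in>-Tp. Z$i$l * u$l)"
      using hrow[of i] sum_split_univ[of "\<lambda>l. Z$i$l * u$l" Tp] by simp
    also have "(\<Sum>l\<in>Tp. Z$i$l * u$l) = (\<Sum>l\<in>Tp. Z$i$l * v$l)"
      by (intro sum.cong refl) (simp add: Tp_def)
    also have "(\<Sum>l\<in>-Tp. Z$i$l * u$l) = (\<Sum>l\<in>-Tp. if l \<in> Tm then sgn (v$i) * \<bar>v$l\<bar> else 0)"
      using cross[OF that] rest by (intro sum.cong refl) auto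
    also have "\<dots> = (\<Sum>l\<in>-Tp \<inter> Tm. sgn (v$l) * 0 + sgn (v$i) * \<bar>v$l\<bar>)"
      by (simp add: sum.inter_restrict)
    also have "-Tp \<inter> Tm = Tm" by (auto simp: Tp_def Tm_def)
    also have "(\<Sum>l\<in>Tm. sgn (v$l) * 0 + sgn (v$i) * \<bar>v$l\<bar>) = sgn (v$i) * M"
      by (simp add: M_def sum_distrib_left)
    finally show ?thesis by linarith
  qed
  define X where "X = (\<Sum>i\<in>Tp. \<Sum>l\<in>Tp. Z$i$l * v$i * v$l)"
  have "X = (\<Sum>i\<in>Tp. v$i * (\<Sum>l\<in>Tp. Z$i$l * v$l))"
    unfolding X_def by (intro sum.cong refl) (simp add: sum_distrib_left mult_ac)
  also have "\<dots> = (\<Sum>i\<in>Tp. - M * (v$i * sgn (v$i)))"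
    using row by (intro sum.cong refl) (simp add: mult_ac)
  also have "\<dots> = - M * P" by (simp add: P_def sgn_self sum_distrib_left)
  finally have X1: "X = - M * P" .
  have "\<bar>X\<bar> \<le> (\<Sum>i\<in>Tp. \<bar>\<Sum>l\<in>Tp. Z$i$l * v$i * v$l\<bar>)" unfolding X_def by (rule sum_abs)
  also have "\<dots> \<le> (\<Sum>i\<in>Tp. \<Sum>l\<in>Tp. \<bar>v$i\<bar> * \<bar>v$l\<bar>)"
  proof (intro sum_mono)
    fix i
    have "\<bar>\<Sum>l\<in>Tp. Z$i$l * v$i * v$l\<bar> \<le> (\<Sum>l\<in>Tp. \<bar>Z$i$l * v$i * v$l\<bar>)" by (rule sum_abs)
    also have "\<dots> \<le> (\<Sum>l\<in>Tp. \<bar>v$i\<bar> * \<bar>v$l\<bar>)"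
    proof (intro sum_mono)
      fix l
      have "\<bar>Z$i$l\<bar> \<le> 1" using Sign_abs[OF hS] .
      hence "\<bar>Z$i$l\<bar> * (\<bar>v$i\<bar> * \<bar>v$l\<bar>) \<le> 1 * (\<bar>v$i\<bar> * \<bar>v$l\<bar>)"
        by (intro mult_right_mono) auto
      thus "\<bar>Z$i$l * v$i * v$l\<bar> \<le> \<bar>v$i\<bar> * \<bar>v$l\<bar>" by (simp add: abs_mult mult_ac)
    qed
    finally show "\<bar>\<Sum>l\<in>Tp. Z$i$l * v$i * v$l\<bar> \<le> (\<Sum>l\<in>Tp. \<bar>v$i\<bar> * \<bar>v$l\<bar>)" .
  qed
  also have "\<dots> = P * P" by (simp add: P_def sum_product)
  finally have "M * P \<le> P * P" using X1 by simp
  moreover have "P > 0"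
  proof -
    obtain i where i: "i \<in> Tp" using ne Tp_def by auto
    have "\<bar>v$i\<bar> \<le> P" unfolding P_def using i by (intro member_le_sum) auto
    moreover have "\<bar>v$i\<bar> > 0" using i by (simp add: Tp_def)
    ultimately show ?thesis by linarith
  qed
  ultimately have "M \<le> P" by simp
  thus ?thesis by (simp add: M_def P_def Tp_def Tm_def)
qed


lemma sum_restrict_sgn: "(\<Sum>l\<in>UNIV. sgn ((v::real^'n)$l) * u$l) = (\<Sum>i\<in>{i. v$i \<noteq> 0}. sgn (v$i) * u$i)"
proof -
  have "(\<Sum>l\<in>UNIV. sgn (v$l) * u$l) = (\<Sum>i\<in>{i. v$i \<noteq> 0}. sgn (v$i) * u$i) + (\<Sum>i\<in>-{i. v$i \<noteq> 0}. sgn (v$i) * u$i)"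
    by (rule sum_split_univ)
  also have "(\<Sum>i\<in>-{i. v$i \<noteq> 0}. sgn (v$i) * u$i) = 0" by (intro sum.neutral) auto
  finally show ?thesis by simp
qed

lemma forward:
  fixes u v :: "real^'n" and Z :: "real^'n^'n"
  assumes hsym: "\<And>i j. Z$i$j = Z$j$i"
    and hS: "\<And>i j. Z$i$j \<in> Sign (u$i * u$j - v$i * v$j)"
    and hrow: "\<And>i. (\<Sum>j\<in>UNIV. Z$i$j * u$j) = 0"
  shows "((\<forall>i. \<bar>u$i\<bar> \<le> \<bar>v$i\<bar>) \<and> (\<Sum>i\<in>{i. v$i \<noteq> 0}. sgn (v$i) * u$i) = 0) \<or> u = v \<or> u = - v"
proof -
  have hle: "\<And>i. \<bar>u$i\<bar> \<le> \<bar>v$i\<bar>" using step1[OF hsym hS hrow] by blast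
  show ?thesis
  proof (cases "\<exists>j. \<bar>u$j\<bar> < \<bar>v$j\<bar>")
    case True
    then obtain j0 where "\<bar>u$j0\<bar> < \<bar>v$j0\<bar>" by blast
    from step2[OF hS hrow hle this] hle show ?thesis by (simp add: sum_restrict_sgn)
  next
    case False
    hence heq: "\<And>i. \<bar>u$i\<bar> = \<bar>v$i\<bar>" using hle by (meson not_less order_antisym)
    define Tp where "Tp = {i. v$i \<noteq> 0 \<and> u$i = v$i}"
    define Tm where "Tm = {i. v$i \<noteq> 0 \<and> u$i = - v$i}"
    have rest: "u$l = 0 \<and> v$l = 0" if "l \<notin> Tp" "l \<notin> Tm" for l
      using that heq[of l] by (auto simp: Tp_def Tm_def abs_if split: if_splits)
    show ?thesis
    proof (cases "Tm = {}")
      case True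
      have "u = v"
      proof (subst vec_eq_iff, intro allI)
        fix i show "u$i = v$i" using rest[of i] True by (cases "i \<in> Tp") (auto simp: Tp_def)
      qed
      thus ?thesis by simp
    next
      case Tm: False
      show ?thesis
      proof (cases "Tp = {}")
        case True
        have "u = - v"
        proof (subst vec_eq_iff, intro allI)
          fix i show "u$i = (- v)$i" using rest[of i] True by (cases "i \<in> Tm") (auto simp: Tm_def)
        qed
        thus ?thesis by simp
      next
        case False
        have le1: "(\<Sum>l\<in>Tm. \<bar>v$l\<bar>) \<le> (\<Sum>l\<in>Tp. \<bar>v$l\<bar>)"
          using step3[OF hsym hS hrow heq] False by (simp add: Tp_def Tm_def)
        have hS': "\<And>i j. Z$i$j \<in> Sign ((-u)$i * (-u)$j - v$i * v$j)" using hS by simp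
        have hrow': "\<And>i. (\<Sum>j\<in>UNIV. Z$i$j * (-u)$j) = 0"
          using hrow by (simp add: sum_negf)
        have heq': "\<And>i. \<bar>(-u)$i\<bar> = \<bar>v$i\<bar>" using heq by simp
        have "{i. v$i \<noteq> 0 \<and> (-u)$i = v$i} = Tm" by (auto simp: Tm_def)
        moreover have "{i. v$i \<noteq> 0 \<and> (-u)$i = - v$i} = Tp" by (auto simp: Tp_def)
        ultimately have le2: "(\<Sum>l\<in>Tp. \<bar>v$l\<bar>) \<le> (\<Sum>l\<in>Tm. \<bar>v$l\<bar>)"
          using step3[OF hsym hS' hrow' heq'] Tm by simp
        have split: "{i. v$i \<noteq> 0} = Tp \<union> Tm" using heq by (auto simp: Tp_def Tm_def abs_eq_iff)
        have disj: "Tp \<inter> Tm = {}" by (auto simp: Tp_def Tm_def)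
        have "(\<Sum>i\<in>{i. v$i \<noteq> 0}. sgn (v$i) * u$i) = (\<Sum>i\<in>Tp. sgn (v$i) * u$i) + (\<Sum>i\<in>Tm. sgn (v$i) * u$i)"
          unfolding split by (rule sum.union_disjoint) (auto simp: disj)
        also have "(\<Sum>i\<in>Tp. sgn (v$i) * u$i) = (\<Sum>i\<in>Tp. \<bar>v$i\<bar>)"
          by (intro sum.cong refl) (simp add: Tp_def sgn_self2)
        also have "(\<Sum>i\<in>Tm. sgn (v$i) * u$i) = - (\<Sum>i\<in>Tm. \<bar>v$i\<bar>)"
          by (simp add: sum_negf[symmetric]) (intro sum.cong refl, simp add: Tm_def sgn_self2)
        finally have "(\<Sum>i\<in>{i. v$i \<noteq> 0}. sgn (v$i) * u$i) = 0" using le1 le2 by simp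
        thus ?thesis using hle by simp
      qed
    qed
  qed
qed

theorem theorem1:
  fixes ustar :: "real^'n"
  assumes "ustar \<noteq> 0"
  shows "{u. stationary_f ustar u} =
    {u. (\<forall>i. \<bar>u$i\<bar> \<le> \<bar>ustar$i\<bar>) \<and>
        (\<Sum>i\<in>{i. ustar$i \<noteq> 0}. sgn (ustar$i) * u$i) = 0} \<union> {ustar, -ustar}"
proof (rule set_eqI, rule iffI)
  fix u :: "real^'n"
  assume "u \<in> {u. stationary_f ustar u}"
  then obtain Z :: "real^'n^'n" where z0: "0 = Z *v u" and zt: "transpose Z = Z"
    and zS: "\<And>i j. Z$i$j \<in> Sign (u$i * u$j - ustar$i * ustar$j)"
    by (auto simp: stationary_f_def subdiff_f_def)
  have hsym: "\<And>i j. Z$i$j = Z$j$i"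
  proof -
    fix i j
    have "Z$i$j = (transpose Z)$i$j" using zt by simp
    thus "Z$i$j = Z$j$i" by (simp add: transpose_def)
  qed
  have hrow: "\<And>i. (\<Sum>j\<in>UNIV. Z$i$j * u$j) = 0"
  proof -
    fix i
    have "(Z *v u)$i = 0" using z0 by simp
    thus "(\<Sum>j\<in>UNIV. Z$i$j * u$j) = 0" by (simp add: matrix_vector_mult_def)
  qed
  from forward[OF hsym zS hrow] show "u \<in> {u. (\<forall>i. \<bar>u$i\<bar> \<le> \<bar>ustar$i\<bar>) \<and>
        (\<Sum>i\<in>{i. ustar$i \<noteq> 0}. sgn (ustar$i) * u$i) = 0} \<union> {ustar, -ustar}" by auto
next
  fix u :: "real^'n"
  assume H: "u \<in> {u. (\<forall>i. \<bar>u$i\<bar> \<le> \<bar>ustar$i\<bar>) \<and>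
        (\<Sum>i\<in>{i. ustar$i \<noteq> 0}. sgn (ustar$i) * u$i) = 0} \<union> {ustar, -ustar}"
  show "u \<in> {u. stationary_f ustar u}"
  proof (cases "u = ustar \<or> u = - ustar")
    case True
    have "0 = (0::real^'n^'n) *v u \<and> transpose (0::real^'n^'n) = 0 \<and>
      (\<forall>i j. (0::real^'n^'n)$i$j \<in> Sign (u$i * u$j - ustar$i * ustar$j))"
      using True by (auto simp: Sign_def transpose_def vec_eq_iff matrix_vector_mult_def)
    thus ?thesis unfolding stationary_f_def subdiff_f_def by blast
  next
    case False
    with H have hle: "\<And>i. \<bar>u$i\<bar> \<le> \<bar>ustar$i\<bar>"
      and hsum: "(\<Sum>i\<in>{i. ustar$i \<noteq> 0}. sgn (ustar$i) * u$i) = 0" by auto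
    define Z :: "real^'n^'n" where "Z = (\<chi> i j. - sgn (ustar$i) * sgn (ustar$j))"
    have "transpose Z = Z" by (simp add: Z_def transpose_def vec_eq_iff mult.commute)
    moreover have "Z *v u = 0"
    proof -
      have "(Z *v u)$i = 0" for i
      proof -
        have "(Z *v u)$i = - sgn (ustar$i) * (\<Sum>l\<in>UNIV. sgn (ustar$l) * u$l)"
          by (simp add: Z_def matrix_vector_mult_def sum_distrib_left mult_ac)
        thus ?thesis using hsum by (simp add: sum_restrict_sgn)
      qed
      thus ?thesis by (simp add: vec_eq_iff)
    qed
    moreover have "Z$i$j \<in> Sign (u$i * u$j - ustar$i * ustar$j)" for i j
    proof (cases "u$i * u$j - ustar$i * ustar$j = 0")
      case True
      thus ?thesis by (simp add: Z_def Sign_def abs_mult sgn_if)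
    next
      case nz: False
      have "\<bar>u$i * u$j\<bar> \<le> \<bar>ustar$i * ustar$j\<bar>"
        using hle by (simp add: abs_mult mult_mono)
      hence "sgn (u$i * u$j - ustar$i * ustar$j) = - sgn (ustar$i * ustar$j)"
        using nz by (auto simp: sgn_if abs_if split: if_splits)
      thus ?thesis using nz by (simp add: Z_def Sign_def real_sgn_eq[symmetric] sgn_mult)
    qed
    ultimately show ?thesis unfolding stationary_f_def subdiff_f_def by force
  qed
qed

end
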